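(* There exists a unique increasing function $u\in C^2(\mathbb{R})$ satisfying \[ u''(\xi)=(u(\xi)-\xi)\,u'(\xi),\quad \xi\in\mathbb{R}, \] such that, for some constants $c,C>0$, \[ \max\{0,\xi\}<u(\xi)<\max\{0,\xi\}+Ce^{-c|\xi|}\quad\text{for all }\xi\in\mathbb{R}. \] *)

theory Defs
  imports "HOL-Analysis.Analysis"
begin

definition C2_real :: "(real \<Rightarrow> real) \<Rightarrow> bool" where
  "C2_real u \<longleftrightarrow>
     (\<forall>x. u differentiable (at x)) \<and>
     (\<forall>x. deriv u differentiable (at x)) \<and>
     continuous_on UNIV (deriv (deriv u))"

end

theory Submission
  imports Defs
begin

definition sfun :: "real \<Rightarrow> real" where
  "sfun p = sqrt (2 * (p - 1 - ln p))"

lemma ln_less_pm1: "0 < p \<Longrightarrow> p \<noteq> 1 \<Longrightarrow> ln p < p - 1"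
  for p :: real
proof -
  assume p: "0 < p" "p \<noteq> 1"
  have sp: "0 < sqrt p" "sqrt p \<noteq> 1" using p by auto
  have "ln p = 2 * ln (sqrt p)" using p by (simp add: ln_sqrt)
  also have "\<dots> \<le> 2 * (sqrt p - 1)" using ln_le_minus_one[OF sp(1)] by simp
  also have "\<dots> < p - 1"
  proof -
    have "0 < (sqrt p - 1)^2" using sp by simp
    then show ?thesis using p by (simp add: power2_eq_square algebra_simps)
  qed
  finally show ?thesis .
qed

lemma slnpos: fixes p :: real assumes "0 < p" "p \<noteq> 1" shows "0 < p - 1 - ln p"
  using ln_less_pm1[OF assms] by linarith

lemma sfun_pos: assumes "0 < p" "p \<noteq> 1" shows "0 < sfun p"
  unfolding sfun_def using slnpos[OF assms] by simp

lemma sfun_sq: "0 < p \<Longrightarrow> (sfun p)^2 = 2 * (p - 1 - ln p)"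
  unfolding sfun_def using ln_le_minus_one[of p] by simp

lemma aux_inv: "inverse (X::real) / 2 * (2 * b) = b / X"
  by (cases "X = 0") (auto simp: field_simps)

lemma sfun_deriv:
  assumes "0 < p" "p < 1"
  shows "(sfun has_real_derivative (1 - 1/p) / sfun p) (at p)"
proof -
  have pos: "0 < 2 * (p - 1 - ln p)" using slnpos[of p] assms by simp
  have g: "((\<lambda>p. 2 * (p - 1 - ln p)) has_real_derivative 2 * (1 - 1/p)) (at p)"
    by (rule derivative_eq_intros refl | use assms in simp)+
  have A: "((\<lambda>p. sqrt (2 * (p - 1 - ln p))) has_real_derivative
      inverse (sqrt (2 * (p - 1 - ln p))) / 2 * (2 * (1 - 1/p))) (at p)"
    by (rule DERIV_chain2[OF DERIV_real_sqrt[OF pos] g])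
  have eq: "inverse (sqrt (2 * (p - 1 - ln p))) / 2 * (2 * (1 - 1/p)) = (1 - 1/p) / sqrt (2 * (p - 1 - ln p))"
    by (rule aux_inv)
  show ?thesis unfolding sfun_def[abs_def] using A by (simp only: eq)
qed

lemma sfun_cont_at: "0 < p \<Longrightarrow> p < 1 \<Longrightarrow> isCont sfun p"
  using sfun_deriv DERIV_isCont by blast

lemma sfun_antitone:
  assumes "0 < a" "a \<le> b" "b < 1"
  shows "sfun b \<le> sfun a"
proof (rule DERIV_nonpos_imp_decreasing_open[OF assms(2)])
  fix x assume x: "a < x" "x < b"
  have "(1 - 1/x) / sfun x \<le> 0"
    using x assms sfun_pos[of x] by (intro divide_nonpos_pos) (auto simp: field_simps)
  then show "\<exists>y. DERIV sfun x :> y \<and> y \<le> 0"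
    using sfun_deriv[of x] x assms by auto
next
  show "continuous_on {a..b} sfun"
    using assms by (intro continuous_at_imp_continuous_on ballI sfun_cont_at) auto
qed

lemma sfun_sq_le: assumes "0 < p" shows "(sfun p)^2 \<le> 2 * (1 - p)^2 / p"
proof -
  have "ln (inverse p) \<le> inverse p - 1" using assms by (intro ln_le_minus_one) auto
  then have "- ln p \<le> 1/p - 1" using assms by (simp add: ln_inverse divide_inverse)
  then have "p - 1 - ln p \<le> (1 - p)^2 / p"
    using assms by (simp add: field_simps power2_eq_square)
  then show ?thesis using sfun_sq[OF assms] by (simp add: field_simps)
qed

lemma sfun_le_near1: assumes "1/2 \<le> p" "p < 1" shows "sfun p \<le> 2 * (1 - p)"
proof -
  have "(sfun p)^2 \<le> 2 * (1 - p)^2 / p" using sfun_sq_le assms by simp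
  also have "\<dots> = (1-p)^2 * (2/p)" by simp
  also have "\<dots> \<le> (1-p)^2 * 4" by (intro mult_left_mono) (use assms in \<open>auto simp: field_simps\<close>)
  also have "\<dots> = (2 * (1 - p))^2" by (simp add: power2_eq_square algebra_simps)
  finally show ?thesis by (rule power2_le_imp_le) (use assms in auto)
qed

definition rfun :: "real \<Rightarrow> real" where
  "rfun q = (if q \<le> 0 then 0 else 1 / sfun q)"

lemma rfun_cont:
  assumes "b < 1"
  shows "continuous_on {0..b} rfun"
proof -
  have "continuous (at x within {0..b}) rfun" if x: "x \<in> {0..b}" for x
  proof (cases "x = 0")
    case False
    then have xp: "0 < x" "x < 1" using x assms by auto
    have "eventually (\<lambda>q. q \<in> {0<..}) (nhds x)"
      using xp by (intro eventually_nhds_in_open) auto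
    then have ev: "eventually (\<lambda>q. (\<lambda>q. 1 / sfun q) q = rfun q) (nhds x)"
      by (rule eventually_mono) (auto simp: rfun_def)
    have "isCont (\<lambda>q. 1 / sfun q) x"
      using sfun_cont_at[OF xp] sfun_pos[of x] xp by (intro continuous_intros) auto
    then have "isCont rfun x" using isCont_cong[OF ev] by simp
    then show ?thesis using continuous_at_imp_continuous_at_within by blast
  next
    case True
    have "(rfun \<longlongrightarrow> 0) (at 0 within {0..b})"
      unfolding tendsto_iff eventually_at
    proof (intro allI impI)
      fix e :: real assume e: "0 < e"
      define d where "d = exp (- (1 + 1 / e^2))"
      have t0: "0 \<le> 1/e^2" by simp
      then have h: "-1 < 1/e^2" by linarith
      have d: "0 < d" "d < 1" unfolding d_def using h by auto
      show "\<exists>d>0. \<forall>q\<in>{0..b}. q \<noteq> 0 \<and> dist q 0 < d \<longrightarrow> dist (rfun q) 0 < e"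
      proof (intro exI conjI ballI impI)
        show "0 < d" by fact
        fix q assume q: "q \<in> {0..b}" "q \<noteq> 0 \<and> dist q 0 < d"
        then have qp: "0 < q" "q < d" by auto
        then have "ln q < ln d" by simp
        then have lq: "ln q < - (1 + 1/e^2)" by (simp add: d_def)
        have "1/e^2 < 2*q - 2 - 2*ln q" using qp lq t0 by linarith
        then have "(1/e)^2 < (sfun q)^2"
          using sfun_sq[of q] qp by (simp add: power_divide)
        then have "1/e < sfun q"
          by (rule power_less_imp_less_base[of _ 2]) (use sfun_pos[of q] qp d in auto)
        then have "1 < sfun q * e" using e by (simp add: divide_less_eq)
        then have "1 / sfun q < e" using sfun_pos[of q] qp d by (simp add: divide_less_eq mult.commute)
        then show "dist (rfun q) 0 < e"
          using qp sfun_pos[of q] d by (simp add: rfun_def)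
      qed
    qed
    then show ?thesis using True by (simp add: continuous_within rfun_def)
  qed
  then show ?thesis by (simp add: continuous_on_eq_continuous_within)
qed

definition Gf :: "real \<Rightarrow> real" where
  "Gf p = integral {0..p} rfun"

lemma Gf_cont: "b < 1 \<Longrightarrow> continuous_on {0..b} Gf"
  unfolding Gf_def[abs_def]
  by (intro indefinite_integral_continuous_1 integrable_continuous_interval rfun_cont)

lemma Gf_0: "Gf 0 = 0" by (simp add: Gf_def)

lemma Gf_deriv:
  assumes "0 < p" "p < 1"
  shows "(Gf has_real_derivative 1 / sfun p) (at p)"
proof -
  define b where "b = (1 + p) / 2"
  have b: "p < b" "b < 1" using assms by (auto simp: b_def)
  have "(Gf has_real_derivative rfun p) (at p within {0..b})"
    unfolding Gf_def[abs_def] using b assms by (intro integral_has_real_derivative rfun_cont) auto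
  moreover have "at p within {0..b} = at p"
    using b assms by (intro at_within_interior) auto
  ultimately show ?thesis using assms by (simp add: rfun_def)
qed

lemma Gf_cont_at: "0 < p \<Longrightarrow> p < 1 \<Longrightarrow> isCont Gf p"
  using Gf_deriv DERIV_isCont by blast

lemma Gf_mono: assumes "0 \<le> a" "a \<le> b" "b < 1" shows "Gf a \<le> Gf b"
proof (rule DERIV_nonneg_imp_increasing_open[OF assms(2)])
  fix x assume x: "a < x" "x < b"
  then show "\<exists>y. DERIV Gf x :> y \<and> y \<ge> 0"
    using Gf_deriv[of x] sfun_pos[of x] assms by (intro exI[of _ "1 / sfun x"]) auto
next
  show "continuous_on {a..b} Gf"
    using Gf_cont[of b] assms by (rule_tac continuous_on_subset) auto
qed

lemma Gf_pos: assumes "0 < p" "p < 1" shows "0 < Gf p"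
proof -
  have "Gf 0 < Gf p"
  proof (rule DERIV_pos_imp_increasing_open[OF assms(1)])
    fix x assume x: "0 < x" "x < p"
    then show "\<exists>y. DERIV Gf x :> y \<and> y > 0"
      using Gf_deriv[of x] sfun_pos[of x] assms by (intro exI[of _ "1 / sfun x"]) auto
  next
    show "continuous_on {0..p} Gf" using Gf_cont assms by auto
  qed
  then show ?thesis by (simp add: Gf_0)
qed

definition Xi :: "real \<Rightarrow> real" where
  "Xi p = Gf p - sfun p"

lemma Xi_deriv:
  assumes "0 < p" "p < 1"
  shows "(Xi has_real_derivative 1 / (p * sfun p)) (at p)"
proof -
  have "(Xi has_real_derivative 1 / sfun p - (1 - 1/p) / sfun p) (at p)"
    unfolding Xi_def[abs_def] by (rule DERIV_diff[OF Gf_deriv[OF assms] sfun_deriv[OF assms]])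
  moreover have "1 / sfun p - (1 - 1/p) / sfun p = 1 / (p * sfun p)"
    using assms sfun_pos[of p] by (simp add: field_simps)
  ultimately show ?thesis by simp
qed

lemma Xi_cont_at: "0 < p \<Longrightarrow> p < 1 \<Longrightarrow> isCont Xi p"
  using Xi_deriv DERIV_isCont by blast

lemma Xi_strict: assumes "0 < a" "a < b" "b < 1" shows "Xi a < Xi b"
proof (rule DERIV_pos_imp_increasing[OF assms(2)])
  fix x assume x: "a \<le> x" "x \<le> b"
  then show "\<exists>y. DERIV Xi x :> y \<and> y > 0"
    using Xi_deriv[of x] sfun_pos[of x] assms by (intro exI[of _ "1 / (x * sfun x)"]) auto
qed

lemma Xi_inj: "0 < a \<Longrightarrow> a < 1 \<Longrightarrow> 0 < b \<Longrightarrow> b < 1 \<Longrightarrow> Xi a = Xi b \<Longrightarrow> a = b"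
  using Xi_strict by (metis less_irrefl linorder_neqE_linordered_idom)

lemma Xi_lower: "\<exists>a. 0 < a \<and> a < 1/2 \<and> Xi a \<le> x"
proof -
  define T where "T = \<bar>Gf (1/2) - x\<bar>"
  define M where "M = T^2 + 2"
  define a where "a = exp (- M)"
  have "exp M \<ge> 1 + M" by simp
  moreover have M2: "M \<ge> 2" by (simp add: M_def)
  ultimately have "2 < exp M" by linarith
  then have a: "0 < a" "a < 1/2" unfolding a_def by (auto simp: exp_minus field_simps)
  have la: "ln a = - M" by (simp add: a_def)
  have "(sfun a)^2 = 2*a + 2*T^2 + 2" using sfun_sq[of a] a la M_def by simp
  moreover have "0 \<le> T^2" by simp
  ultimately have "T^2 < (sfun a)^2" using a by linarith
  then have "T < sfun a" by (rule power_less_imp_less_base[of _ 2]) (use sfun_pos[of a] a in auto)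
  moreover have "Gf a \<le> Gf (1/2)" using a by (intro Gf_mono) auto
  ultimately have "Xi a \<le> x" unfolding Xi_def T_def by linarith
  with a show ?thesis by blast
qed

lemma Xi_upper: "\<exists>b. 1/2 \<le> b \<and> b < 1 \<and> x \<le> Xi b"
proof -
  define h where "h p = Gf p + ln (1 - p) / 2" for p
  have hmono: "h (1/2) \<le> h b" if b: "1/2 \<le> b" "b < 1" for b
  proof (rule DERIV_nonneg_imp_increasing_open[OF b(1)])
    fix y assume y: "1/2 < y" "y < b"
    have l1: "((\<lambda>p. 1 - p) has_real_derivative 0 - 1) (at y)"
      by (rule DERIV_diff[OF DERIV_const DERIV_ident])
    have l2: "((\<lambda>p. ln (1 - p)) has_real_derivative inverse (1 - y) * (0 - 1)) (at y)"
      using y b by (intro DERIV_chain2[OF DERIV_ln l1]) auto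
    have d0: "(h has_real_derivative 1 / sfun y + (inverse (1 - y) * (0 - 1)) / 2) (at y)"
      unfolding h_def[abs_def] using y b by (intro DERIV_add Gf_deriv DERIV_cdivide l2) auto
    have "inverse (1 - y) * (0 - 1) = - 1 / (1 - y)" by (simp add: divide_inverse)
    with d0 have d: "(h has_real_derivative 1 / sfun y + (- 1 / (1 - y)) / 2) (at y)" by simp
    have "sfun y \<le> 2 * (1 - y)" using sfun_le_near1 y b by auto
    then have "1 / (2 * (1 - y)) \<le> 1 / sfun y" using sfun_pos[of y] y b
      by (intro divide_left_mono) auto
    then have "0 \<le> 1 / sfun y + (- 1 / (1 - y)) / 2" by (simp add: field_simps)
    with d show "\<exists>y'. DERIV h y :> y' \<and> y' \<ge> 0" by blast
  next
    have "isCont h y" if y: "1/2 \<le> y" "y \<le> b" for y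
      unfolding h_def[abs_def] using Gf_cont_at[of y] y b by (intro continuous_intros) auto
    then show "continuous_on {1/2..b} h" by (intro continuous_at_imp_continuous_on) auto
  qed
  define N where "N = \<bar>x\<bar> + \<bar>h (1/2)\<bar> + 2"
  define b where "b = 1 - exp (- (2 * N))"
  have "exp (2 * N) \<ge> 1 + 2 * N" by simp
  moreover have "N \<ge> 2" by (simp add: N_def)
  ultimately have "2 < exp (2 * N)" by linarith
  then have b: "1/2 \<le> b" "b < 1" unfolding b_def by (auto simp: exp_minus field_simps)
  have lb: "ln (1 - b) = - (2 * N)" by (simp add: b_def)
  have "sfun b \<le> 2 * (1 - b)" using sfun_le_near1 b by auto
  moreover have "2 * (1 - b) \<le> 1" using b by simp
  moreover have "h (1/2) \<le> h b" using hmono b by auto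
  moreover have "h b = Gf b - N" by (simp add: h_def lb)
  moreover have "x \<le> \<bar>x\<bar>" "- h (1/2) \<le> \<bar>h (1/2)\<bar>" by auto
  ultimately have "x \<le> Xi b" unfolding Xi_def N_def by linarith
  with b show ?thesis by blast
qed

lemma Xi_surj: "\<exists>p. 0 < p \<and> p < 1 \<and> Xi p = x"
proof -
  obtain a where a: "0 < a" "a < 1/2" "Xi a \<le> x" using Xi_lower by blast
  obtain b where b: "1/2 \<le> b" "b < 1" "x \<le> Xi b" using Xi_upper by blast
  have "continuous_on {a..b} Xi" using a b by (intro continuous_at_imp_continuous_on ballI Xi_cont_at) auto
  then obtain p where "a \<le> p" "p \<le> b" "Xi p = x" using IVT'[of Xi a x b] a b by auto
  then show ?thesis using a b by (intro exI[of _ p]) auto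
qed

definition Pf :: "real \<Rightarrow> real" where
  "Pf x = (THE p. 0 < p \<and> p < 1 \<and> Xi p = x)"

lemma Pf: "0 < Pf x \<and> Pf x < 1 \<and> Xi (Pf x) = x"
proof -
  obtain p where p: "0 < p \<and> p < 1 \<and> Xi p = x" using Xi_surj by blast
  show ?thesis unfolding Pf_def
    by (rule theI[of _ p]) (use p Xi_inj in blast)+
qed

lemma Pf_Xi: "0 < p \<Longrightarrow> p < 1 \<Longrightarrow> Pf (Xi p) = p"
  using Pf[of "Xi p"] Xi_inj by blast

lemma Pf_mono: "x \<le> y \<Longrightarrow> Pf x \<le> Pf y"
  using Pf[of x] Pf[of y] Xi_strict[of "Pf y" "Pf x"] by force

lemma Pf_cont: "isCont Pf x"
proof -
  define p where "p = Pf x"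
  have p: "0 < p" "p < 1" using Pf[of x] by (auto simp: p_def)
  have "isCont Pf (Xi p)"
    by (rule isCont_inverse_function2[of "p/2" p "(1+p)/2"]) (use p Pf_Xi Xi_cont_at in auto)
  then show ?thesis using Pf[of x] by (simp add: p_def)
qed

lemma Pf_deriv: "(Pf has_real_derivative Pf x * sfun (Pf x)) (at x)"
proof -
  define p where "p = Pf x"
  have p: "0 < p" "p < 1" "Xi p = x" using Pf[of x] by (auto simp: p_def)
  have dX: "(Xi has_real_derivative 1 / (p * sfun p)) (at (Pf x))"
    using Xi_deriv[OF p(1) p(2)] unfolding p_def .
  have "(Pf has_real_derivative inverse (1 / (p * sfun p))) (at x)"
    by (rule DERIV_inverse_function[where f=Xi and g=Pf and a="x - 1" and b="x + 1", OF dX])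
       (use p sfun_pos[of p] Pf Pf_cont in auto)
  then show ?thesis by (simp add: p_def)
qed

definition u0 :: "real \<Rightarrow> real" where
  "u0 x = Gf (Pf x)"

lemma u0_deriv: "(u0 has_real_derivative Pf x) (at x)"
proof -
  have p: "0 < Pf x" "Pf x < 1" using Pf[of x] by auto
  have "(u0 has_real_derivative (1 / sfun (Pf x)) * (Pf x * sfun (Pf x))) (at x)"
    unfolding u0_def[abs_def] by (rule DERIV_chain2[OF Gf_deriv[OF p] Pf_deriv])
  then show ?thesis using sfun_pos[of "Pf x"] p by simp
qed

lemma u0_minus: "u0 x - x = sfun (Pf x)"
  using Pf[of x] unfolding u0_def Xi_def by linarith

lemma u0_pos: "0 < u0 x"
  using Pf[of x] Gf_pos unfolding u0_def by auto

lemma deriv_u0: "deriv u0 = Pf"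
  using u0_deriv DERIV_imp_deriv by blast

lemma deriv2_u0: "deriv (deriv u0) x = Pf x * sfun (Pf x)"
  by (simp add: deriv_u0 DERIV_imp_deriv[OF Pf_deriv])

lemma u0_C2: "C2_real u0"
  unfolding C2_real_def
proof (intro conjI allI)
  fix x show "u0 differentiable (at x)" using u0_deriv real_differentiable_def by blast
next
  fix x show "deriv u0 differentiable (at x)" unfolding deriv_u0 using Pf_deriv real_differentiable_def by blast
next
  have "isCont (\<lambda>x. Pf x * sfun (Pf x)) x" for x
    using Pf[of x] by (intro continuous_intros Pf_cont isCont_o2[OF Pf_cont] sfun_cont_at) auto
  then show "continuous_on UNIV (deriv (deriv u0))"
    unfolding deriv2_u0[abs_def] by (intro continuous_at_imp_continuous_on) auto
qed

lemma u0_mono: "mono u0"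
proof (rule monoI)
  fix x y :: real assume "x \<le> y"
  then show "u0 x \<le> u0 y"
  proof (cases "x = y")
    case False
    with \<open>x \<le> y\<close> have "x < y" by simp
    then show ?thesis
      using DERIV_pos_imp_increasing[of x y u0] u0_deriv Pf by fastforce
  qed simp
qed

lemma u0_ode: "deriv (deriv u0) x = (u0 x - x) * deriv u0 x"
proof -
  have "deriv (deriv u0) x = Pf x * sfun (Pf x)" by (rule deriv2_u0)
  also have "\<dots> = (u0 x - x) * deriv u0 x" by (simp add: u0_minus deriv_u0)
  finally show ?thesis .
qed

lemma u0_left:
  assumes "x \<le> 0"
  shows "u0 x \<le> u0 0 * exp (sfun (Pf 0) * x)"
proof -
  define P0 where "P0 = Pf 0"
  define k where "k = sfun P0"
  have P0: "0 < P0" "P0 < 1" using Pf[of 0] by (auto simp: P0_def)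
  have k: "0 < k" using sfun_pos P0 by (simp add: k_def)
  have Gle: "Gf p \<le> p / k" if p: "0 \<le> p" "p \<le> P0" for p
  proof -
    have "0 / k - Gf 0 \<le> p / k - Gf p"
    proof (rule DERIV_nonneg_imp_increasing_open[OF p(1)])
      fix y assume y: "0 < y" "y < p"
      have "k \<le> sfun y" unfolding k_def using y p P0 by (intro sfun_antitone) auto
      then have "1 / sfun y \<le> 1 / k" using k by (intro divide_left_mono) auto
      moreover have "((\<lambda>p. p / k - Gf p) has_real_derivative 1 / k - 1 / sfun y) (at y)"
        using Gf_deriv[of y] y p P0 k by (intro derivative_eq_intros) auto
      ultimately show "\<exists>y'. ((\<lambda>p. p / k - Gf p) has_real_derivative y') (at y) \<and> 0 \<le> y'"
        by (intro exI conjI) auto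
    next
      show "continuous_on {0..p} (\<lambda>p. p / k - Gf p)"
        using Gf_cont[of p] p P0 k by (intro continuous_intros) auto
    qed
    then show ?thesis by (simp add: Gf_0)
  qed
  define w where "w y = u0 y * exp (- k * y)" for y
  have "w x \<le> w 0"
  proof (rule DERIV_nonneg_imp_increasing_open[OF assms])
    fix y assume y: "x < y" "y < 0"
    have e1: "((\<lambda>y. exp (- k * y)) has_real_derivative exp (- k * y) * (- k * 1)) (at y)"
      by (intro derivative_eq_intros) auto
    have "((\<lambda>y. u0 y * exp (- k * y)) has_real_derivative
        Pf y * exp (- k * y) + u0 y * (exp (- k * y) * (- k * 1))) (at y)"
      by (rule DERIV_cong[OF DERIV_mult[OF u0_deriv e1]]) (simp add: algebra_simps)
    moreover have "Pf y * exp (- k * y) + u0 y * (exp (- k * y) * (- k * 1)) = (Pf y - k * u0 y) * exp (- k * y)"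
      by (simp add: algebra_simps)
    moreover have "0 \<le> Pf y - k * u0 y"
    proof -
      have "Pf y \<le> P0" unfolding P0_def using y by (intro Pf_mono) auto
      then have "u0 y \<le> Pf y / k" unfolding u0_def using Pf[of y] by (intro Gle) auto
      then show ?thesis using k by (simp add: field_simps)
    qed
    ultimately show "\<exists>y'. (w has_real_derivative y') (at y) \<and> 0 \<le> y'"
      unfolding w_def[abs_def] by (intro exI conjI) auto
  next
    have "isCont w y" for y
      unfolding w_def[abs_def] using u0_deriv DERIV_isCont by (intro continuous_intros) auto
    then show "continuous_on {x..0} w" by (intro continuous_at_imp_continuous_on) auto
  qed
  then have "u0 x * exp (- k * x) \<le> u0 0" by (simp add: w_def)
  then have "u0 x \<le> u0 0 * exp (k * x)"
    by (simp add: exp_minus field_simps)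
  then show ?thesis by (simp add: k_def P0_def)
qed

lemma u0_right:
  assumes "0 \<le> x"
  shows "u0 x - x \<le> sfun (Pf 0) * exp (- (Pf 0 / 2) * x)"
proof -
  define P0 where "P0 = Pf 0"
  define k where "k = P0 / 2"
  have P0: "0 < P0" "P0 < 1" using Pf[of 0] by (auto simp: P0_def)
  have k: "0 < k" using P0 by (simp add: k_def)
  define w where "w y = (u0 y - y) * exp (k * y)" for y
  have "w x \<le> w 0"
  proof (rule DERIV_nonpos_imp_decreasing_open[OF assms])
    fix y assume y: "0 < y" "y < x"
    have e1: "((\<lambda>y. exp (k * y)) has_real_derivative exp (k * y) * (k * 1)) (at y)"
      by (intro derivative_eq_intros) auto
    have e2: "((\<lambda>y. u0 y - y) has_real_derivative Pf y - 1) (at y)"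
      by (rule DERIV_diff[OF u0_deriv DERIV_ident])
    have "(w has_real_derivative
        (Pf y - 1) * exp (k * y) + (u0 y - y) * (exp (k * y) * (k * 1))) (at y)"
      unfolding w_def[abs_def] by (rule DERIV_cong[OF DERIV_mult[OF e2 e1]]) (simp add: algebra_simps)
    moreover have "(Pf y - 1) * exp (k * y) + (u0 y - y) * (exp (k * y) * (k * 1)) = (Pf y - 1 + k * (u0 y - y)) * exp (k * y)"
      by (simp add: algebra_simps)
    moreover have "Pf y - 1 + k * (u0 y - y) \<le> 0"
    proof -
      define p where "p = Pf y"
      have p: "0 < p" "p < 1" using Pf[of y] by (auto simp: p_def)
      have pP0: "P0 \<le> p" unfolding P0_def p_def using y by (intro Pf_mono) auto
      have "(k * sfun p)^2 = k^2 * (sfun p)^2" by (simp add: power_mult_distrib)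
      also have "\<dots> \<le> k^2 * (2 * (1 - p)^2 / p)" using sfun_sq_le[of p] p by (intro mult_left_mono) auto
      also have "\<dots> = (P0 / p) * (P0 / 2) * (1 - p)^2" using p by (simp add: k_def power2_eq_square field_simps)
      also have "\<dots> \<le> 1 * 1 * (1 - p)^2"
        using pP0 p P0 by (intro mult_right_mono mult_mono) auto
      also have "\<dots> = (1 - p)^2" by simp
      finally have "k * sfun p \<le> 1 - p"
        by (rule power2_le_imp_le) (use p k sfun_pos[of p] in auto)
      then show ?thesis using u0_minus[of y] by (simp add: p_def)
    qed
    ultimately have "(w has_real_derivative (Pf y - 1 + k * (u0 y - y)) * exp (k * y)) (at y)"
      "(Pf y - 1 + k * (u0 y - y)) * exp (k * y) \<le> 0" by (auto intro: mult_nonpos_nonneg)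
    then show "\<exists>y'. (w has_real_derivative y') (at y) \<and> y' \<le> 0" by blast
  next
    have "isCont w y" for y
      unfolding w_def[abs_def] using u0_deriv DERIV_isCont by (intro continuous_intros) auto
    then show "continuous_on {0..x} w" by (intro continuous_at_imp_continuous_on) auto
  qed
  then have "(u0 x - x) * exp (k * x) \<le> sfun P0" using u0_minus[of 0] by (simp add: w_def u0_minus P0_def)
  then have "u0 x - x \<le> sfun P0 * exp (- k * x)"
    by (simp add: exp_minus field_simps)
  then show ?thesis by (simp add: k_def P0_def)
qed

lemma u0_bounds: "\<exists>c C :: real. c > 0 \<and> C > 0 \<and>
        (\<forall>\<xi>. max 0 \<xi> < u0 \<xi> \<and> u0 \<xi> < max 0 \<xi> + C * exp (- c * \<bar>\<xi>\<bar>))"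
proof -
  define P0 where "P0 = Pf 0"
  have P0: "0 < P0" "P0 < 1" using Pf[of 0] by (auto simp: P0_def)
  define k1 where "k1 = sfun P0"
  define k2 where "k2 = P0 / 2"
  have k1: "0 < k1" using sfun_pos P0 by (simp add: k1_def)
  have k2: "0 < k2" using P0 by (simp add: k2_def)
  define c where "c = min k1 k2"
  define C where "C = u0 0 + k1 + 1"
  have c: "0 < c" using k1 k2 by (simp add: c_def)
  have C: "0 < C" using u0_pos[of 0] k1 unfolding C_def by linarith
  have uC: "u0 0 < C" using k1 unfolding C_def by linarith
  have "max 0 x < u0 x \<and> u0 x < max 0 x + C * exp (- c * \<bar>x\<bar>)" for x
  proof (cases "x \<le> 0")
    case True
    have "u0 x \<le> u0 0 * exp (k1 * x)" using u0_left[OF True] by (simp add: k1_def P0_def)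
    also have "\<dots> \<le> u0 0 * exp (c * x)"
      using True u0_pos[of 0] by (intro mult_left_mono) (auto simp: c_def intro!: mult_right_mono_neg)
    also have "\<dots> < C * exp (c * x)"
    proof -
      have "0 < k1 + 1" using k1 by linarith
      then show ?thesis by (simp add: C_def)
    qed
    finally show ?thesis using True u0_pos[of x] uC by (simp add: abs_if)
  next
    case False
    have "u0 x - x \<le> k1 * exp (- k2 * x)" using u0_right[of x] False by (simp add: k1_def k2_def P0_def)
    also have "\<dots> \<le> k1 * exp (- c * x)"
      using False k1 by (intro mult_left_mono) (auto simp: c_def intro!: mult_right_mono)
    also have "\<dots> < C * exp (- c * x)" using u0_pos[of 0] by (simp add: C_def)
    finally show ?thesis using False u0_minus[of x] sfun_pos[of "Pf x"] Pf[of x] by (simp add: abs_if)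
  qed
  then show ?thesis using c C by blast
qed

lemma small_exp:
  fixes c C e T :: real
  assumes "0 < c" "0 < C" "0 < e"
  shows "\<exists>t\<ge>T. C * exp (- c * t) < e"
proof -
  define t where "t = max T (ln (C / e) / c + 1)"
  have "ln (C / e) / c + 1 \<le> t" by (simp add: t_def)
  then have "ln (C / e) + c \<le> c * t" using assms by (simp add: field_simps)
  then have "ln (C / e) < c * t" using assms by linarith
  then have "exp (- (c * t)) < exp (- ln (C / e))" by simp
  also have "\<dots> = e / C" using assms by (simp add: exp_minus)
  finally have "exp (- c * t) * C < e" using assms by (simp add: pos_less_divide_eq)
  then have "C * exp (- c * t) < e" by (simp add: mult.commute)
  moreover have "T \<le> t" by (simp add: t_def)
  ultimately show ?thesis by blast
qed

lemma small_left:
  fixes u :: "real \<Rightarrow> real"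
  assumes "0 < c" "0 < C" "\<forall>\<xi>. max 0 \<xi> < u \<xi> \<and> u \<xi> < max 0 \<xi> + C * exp (- c * \<bar>\<xi>\<bar>)"
    and "0 < e"
  shows "\<exists>t. u t < e"
proof -
  obtain s where s: "0 \<le> s" "C * exp (- c * s) < e" using small_exp[OF assms(1,2,4), of 0] by blast
  have "u (- s) < max 0 (- s) + C * exp (- c * \<bar>- s\<bar>)" using assms(3) by blast
  also have "\<dots> = C * exp (- c * s)" using s by simp
  finally show ?thesis using s by (intro exI[of _ "- s"]) simp
qed

lemma fq_ge1: "0 < (q::real) \<Longrightarrow> 1 \<le> q - ln q"
  using ln_le_minus_one[of q] by simp

lemma uniq:
  fixes u :: "real \<Rightarrow> real" and c C :: real
  assumes C2: "C2_real u" and mono: "mono u"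
    and ode: "\<forall>\<xi>. deriv (deriv u) \<xi> = (u \<xi> - \<xi>) * deriv u \<xi>"
    and c: "0 < c" and C: "0 < C"
    and bnd: "\<forall>\<xi>. max 0 \<xi> < u \<xi> \<and> u \<xi> < max 0 \<xi> + C * exp (- c * \<bar>\<xi>\<bar>)"
  shows "u = u0"
proof -
  define w where "w = deriv u"
  have du: "(u has_real_derivative w x) (at x)" for x
    using C2 unfolding C2_real_def w_def by (simp add: DERIV_deriv_iff_real_differentiable)
  have dw: "(w has_real_derivative (u x - x) * w x) (at x)" for x
  proof -
    have "(w has_real_derivative deriv w x) (at x)"
      using C2 unfolding C2_real_def w_def by (simp add: DERIV_deriv_iff_real_differentiable)
    then show ?thesis using ode by (simp add: w_def)
  qed
  have cu: "isCont u x" for x using du DERIV_isCont by blast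
  have cw: "isCont w x" for x using dw DERIV_isCont by blast
  have pos: "max 0 x < u x" for x using bnd by blast
  have vpos: "0 < u x - x" for x using pos[of x] by simp
  have vsmall: "u x - x < C * exp (- c * x)" if "0 \<le> x" for x
  proof -
    have "u x < max 0 x + C * exp (- c * \<bar>x\<bar>)" using bnd by blast
    then show ?thesis using that by simp
  qed
  have w_nonneg: "0 \<le> w x" for x
  proof (rule ccontr)
    assume "\<not> 0 \<le> w x"
    then obtain d where "d > 0" "\<forall>h>0. h < d \<longrightarrow> u x > u (x + h)"
      using DERIV_neg_dec_right[OF du[of x]] by force
    then have "u x > u (x + d/2)" by simp
    moreover have "u x \<le> u (x + d/2)" using mono \<open>d > 0\<close> by (simp add: monoD)
    ultimately show False by simp
  qed
  have w_pos: "0 < w a" for a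
  proof (rule ccontr)
    assume "\<not> 0 < w a"
    then have wa: "w a = 0" using w_nonneg[of a] by simp
    define b where "b = a + \<bar>u a\<bar> + \<bar>a\<bar> + 1"
    have ab: "a < b" by (simp add: b_def)
    have "compact ((\<lambda>t. u t - t) ` {a..b})"
      using cu by (intro compact_continuous_image continuous_at_imp_continuous_on continuous_intros) auto
    then obtain M where M: "\<forall>y\<in>(\<lambda>t. u t - t) ` {a..b}. norm y \<le> M"
      using compact_imp_bounded bounded_iff by metis
    have M': "u t - t \<le> M" if "t \<in> {a..b}" for t using M that by force
    define z where "z t = (w t)^2 * exp (- (2 * M) * t)" for t
    have dz: "(z has_real_derivative 2 * (w t)^2 * (u t - t - M) * exp (- (2 * M) * t)) (at t)" for t
    proof -
      have e1: "((\<lambda>t. exp (- (2 * M) * t)) has_real_derivative exp (- (2 * M) * t) * (- (2 * M) * 1)) (at t)"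
        by (intro derivative_eq_intros) auto
      have w2: "((\<lambda>t. w t * w t) has_real_derivative (u t - t) * w t * w t + (u t - t) * w t * w t) (at t)"
        by (rule DERIV_mult[OF dw dw])
      show ?thesis unfolding z_def[abs_def] power2_eq_square
        by (rule DERIV_cong[OF DERIV_mult[OF w2 e1]]) (simp add: algebra_simps)
    qed
    have wz: "w t = 0" if t: "t \<in> {a..b}" for t
    proof -
      have "z a \<ge> z t"
      proof (rule DERIV_nonpos_imp_decreasing_open[of a t z])
        show "a \<le> t" using t by simp
        fix y assume y: "a < y" "y < t"
        have "u y - y - M \<le> 0" using M'[of y] y t by simp
        then have "2 * (w y)^2 * (u y - y - M) * exp (- (2 * M) * y) \<le> 0"
          by (intro mult_nonpos_nonneg mult_nonneg_nonpos) auto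
        then show "\<exists>y'. (z has_real_derivative y') (at y) \<and> y' \<le> 0" using dz by blast
      next
        show "continuous_on {a..t} z"
          using dz DERIV_isCont by (intro continuous_at_imp_continuous_on) blast
      qed
      then have "(w t)^2 * exp (- (2 * M) * t) \<le> 0" by (simp add: z_def wa)
      then have "(w t)^2 \<le> 0" by (simp add: mult_le_0_iff)
      then show ?thesis by simp
    qed
    have "u b = u a"
    proof (rule DERIV_isconst_end[OF ab])
      show "continuous_on {a..b} u" using cu by (intro continuous_at_imp_continuous_on) auto
      fix x assume "a < x" "x < b"
      then show "DERIV u x :> 0" using du[of x] wz[of x] by simp
    qed
    moreover have "u b > b" using pos[of b] by simp
    moreover have "b \<ge> u a + 1" by (simp add: b_def)
    ultimately show False by simp
  qed
  define H where "H t = (u t - t) * (u t - t) / 2 - w t + ln (w t)" for t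
  have dH: "(H has_real_derivative 0) (at t)" for t
  proof -
    have d1: "((\<lambda>t. u t - t) has_real_derivative w t - 1) (at t)"
      by (rule DERIV_diff[OF du DERIV_ident])
    have dln: "((\<lambda>t. ln (w t)) has_real_derivative inverse (w t) * ((u t - t) * w t)) (at t)"
      by (rule DERIV_chain2[OF DERIV_ln[OF w_pos] dw])
    show ?thesis unfolding H_def[abs_def]
      by (rule DERIV_cong[OF DERIV_add[OF DERIV_diff[OF DERIV_cdivide[OF DERIV_mult[OF d1 d1]] dw] dln]])
         (use w_pos[of t] in \<open>simp add: field_simps\<close>)
  qed
  define K where "K = H 0"
  have HK: "H t = K" for t unfolding K_def using dH DERIV_isconst_all by blast
  have fw: "w t - ln (w t) = (u t - t)^2 / 2 - K" for t
    using HK[of t] unfolding H_def by (simp add: power2_eq_square)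
  have L: "\<forall>t. w t < 1" if ne: "\<forall>t. w t \<noteq> 1"
  proof (rule ccontr)
    assume "\<not> (\<forall>t. w t < 1)"
    then obtain t0 where t0: "w t0 > 1" using ne by (meson linorder_neqE_linordered_idom)
    have all: "w s > 1" for s
    proof (rule ccontr)
      assume "\<not> w s > 1"
      then have ws: "w s < 1" using ne[rule_format, of s] by simp
      have cont: "continuous_on {x..y} w" for x y using cw by (intro continuous_at_imp_continuous_on) auto
      show False
      proof (cases "s \<le> t0")
        case True
        then obtain x where "w x = 1" using IVT'[of w s 1 t0, OF _ _ True cont] ws t0 by auto
        then show False using ne by auto
      next
        case False
        then obtain x where "w x = 1" using IVT2'[of w s 1 t0, OF _ _ _ cont] ws t0 by auto
        then show False using ne by auto
      qed
    qed
    obtain t where t: "1 \<le> t" "C * exp (- c * t) < u 1 - 1"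
      using small_exp[OF c C vpos[of 1], of 1] by blast
    have "u 1 - 1 \<le> u t - t"
    proof (rule DERIV_nonneg_imp_increasing_open[OF t(1)])
      fix y assume "1 < y" "y < t"
      show "\<exists>y'. ((\<lambda>t. u t - t) has_real_derivative y') (at y) \<and> 0 \<le> y'"
        using DERIV_diff[OF du DERIV_ident, of y] all[of y] by (intro exI conjI) auto
    next
      show "continuous_on {1..t} (\<lambda>t. u t - t)" using cu by (intro continuous_at_imp_continuous_on continuous_intros) auto
    qed
    then show False using vsmall[of t] t by simp
  qed
  have Kle: "K \<le> -1"
  proof (rule ccontr)
    assume "\<not> K \<le> -1"
    then have K1: "0 < 1 + K" by simp
    obtain t where t: "0 \<le> t" "C * exp (- c * t) < min 1 (1 + K)"
      using small_exp[OF c C, of "min 1 (1 + K)" 0] K1 by auto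
    have v: "0 < u t - t" "u t - t < min 1 (1 + K)" using vpos[of t] vsmall[of t] t by auto
    have "(u t - t)^2 \<le> u t - t" using v by (simp add: power2_eq_square mult_le_cancel_right1)
    then have "(u t - t)^2 / 2 < 1 + K" using v by simp
    moreover have "1 \<le> w t - ln (w t)" using fq_ge1 w_pos by blast
    ultimately show False using fw[of t] by simp
  qed
  have Kge: "K \<ge> -1"
  proof (rule ccontr)
    assume "\<not> K \<ge> -1"
    define d where "d = -1 - K"
    have d: "0 < d" using \<open>\<not> K \<ge> -1\<close> by (simp add: d_def)
    have fw1: "1 + d \<le> w t - ln (w t)" for t
      using fw[of t] by (simp add: d_def)
    have "w t \<noteq> 1" for t using fw1[of t] d by auto
    then have wl1: "w t < 1" for t using L by blast
    define e where "e = min (1/2) (d/4)"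
    have e: "0 < e" "e \<le> 1/2" "e \<le> d/4" using d by (auto simp: e_def)
    have wle: "w t \<le> 1 - e" for t
    proof (rule ccontr)
      assume "\<not> w t \<le> 1 - e"
      then have wt: "1 - e < w t" "1/2 \<le> w t" using e by auto
      have "2 * (w t - 1 - ln (w t)) \<le> 2 * (1 - w t)^2 / w t"
        using sfun_sq_le[of "w t"] sfun_sq[of "w t"] w_pos[of t] by simp
      also have "\<dots> = (1 - w t)^2 * (2 / w t)" by simp
      also have "\<dots> \<le> (1 - w t)^2 * 4"
        using wt w_pos[of t] by (intro mult_left_mono) (auto simp: field_simps)
      also have "\<dots> = 2 * (1 - w t)^2 * 2" by simp
      also have "\<dots> \<le> 4 * e^2"
      proof -
        have "(1 - w t)^2 \<le> e^2" using wt wl1[of t] by (intro power_mono) auto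
        then show ?thesis by simp
      qed
      also have "\<dots> \<le> 4 * (1/2 * (d/4))"
      proof -
        have "e * e \<le> (1/2) * (d/4)" by (rule mult_mono) (use e in auto)
        then show ?thesis by (simp add: power2_eq_square)
      qed
      finally have "w t - ln (w t) \<le> 1 + d/4" by simp
      then show False using fw1[of t] d by simp
    qed
    define T where "T = (u 0 - 0) / e + 1"
    have T: "0 \<le> T" using vpos[of 0] e by (simp add: T_def)
    have "u T - T + e * T \<le> u 0 - 0 + e * 0"
    proof (rule DERIV_nonpos_imp_decreasing_open[OF T])
      fix y assume "0 < y" "y < T"
      show "\<exists>y'. ((\<lambda>t. u t - t + e * t) has_real_derivative y') (at y) \<and> y' \<le> 0"
        using DERIV_add[OF DERIV_diff[OF du DERIV_ident] DERIV_cmult[OF DERIV_ident, of e], of y] wle[of y]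
        by (intro exI conjI) auto
    next
      show "continuous_on {0..T} (\<lambda>t. u t - t + e * t)" using cu by (intro continuous_at_imp_continuous_on continuous_intros) auto
    qed
    moreover have "e * T = u 0 + e" using e by (simp add: T_def field_simps)
    ultimately have "u T - T \<le> - e" by simp
    then show False using vpos[of T] e by simp
  qed
  have K: "K = -1" using Kle Kge by simp
  have wl1: "w t < 1" for t
  proof -
    have "w t \<noteq> 1" for t using fw[of t] vpos[of t] K by auto
    then show ?thesis using L by blast
  qed
  have vs: "u t - t = sfun (w t)" for t
  proof -
    have "(sfun (w t))^2 = (u t - t)^2" using sfun_sq[of "w t"] w_pos[of t] fw[of t] K by simp
    then show ?thesis using vpos[of t] sfun_pos[of "w t"] w_pos[of t] wl1[of t]
      by (simp add: power2_eq_iff_nonneg)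
  qed
  define q where "q t = Gf (w t) - u t" for t
  have dq: "(q has_real_derivative 0) (at t)" for t
  proof -
    have "(q has_real_derivative 1 / sfun (w t) * ((u t - t) * w t) - w t) (at t)"
      unfolding q_def[abs_def] using w_pos[of t] wl1[of t]
      by (intro DERIV_diff DERIV_chain2[OF Gf_deriv dw] du) auto
    moreover have "1 / sfun (w t) * ((u t - t) * w t) - w t = 0"
      using vs[of t] sfun_pos[of "w t"] w_pos[of t] wl1[of t] by simp
    ultimately show ?thesis by simp
  qed
  define D where "D = q 0"
  have qD: "Gf (w t) = u t + D" for t using DERIV_isconst_all[OF allI[OF dq], of t 0]
    by (simp add: q_def D_def)
  have wP: "w t = Pf (t + D)" for t
  proof -
    have "Xi (w t) = t + D" using qD[of t] vs[of t] by (simp add: Xi_def)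
    then show ?thesis using Pf_Xi[of "w t"] w_pos[of t] wl1[of t] by simp
  qed
  have uD: "u t = u0 (t + D) - D" for t
    using qD[of t] wP[of t] by (simp add: u0_def)
  have D0: "D = 0"
  proof (rule ccontr)
    assume "D \<noteq> 0"
    then consider "D > 0" | "D < 0" by linarith
    then show False
    proof cases
      case 1
      obtain c0 C0 where c0: "c0 > 0" "C0 > 0" and b0: "\<forall>\<xi>. max 0 \<xi> < u0 \<xi> \<and> u0 \<xi> < max 0 \<xi> + C0 * exp (- c0 * \<bar>\<xi>\<bar>)"
        using u0_bounds by blast
      obtain y where "u0 y < D" using small_left[OF c0 b0 1] by blast
      then have "u (y - D) < 0" using uD[of "y - D"] by simp
      then show False using pos[of "y - D"] by simp
    next
      case 2
      obtain t where "u t < - D" using small_left[OF c C bnd, of "- D"] 2 by auto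
      then have "u0 (t + D) < 0" using uD[of t] by simp
      then show False using u0_pos[of "t + D"] by simp
    qed
  qed
  show "u = u0" using uD D0 by auto
qed

theorem proposition1p3:
  shows "\<exists>!u :: real \<Rightarrow> real.
     C2_real u \<and> mono u \<and>
     (\<forall>\<xi>. deriv (deriv u) \<xi> = (u \<xi> - \<xi>) * deriv u \<xi>) \<and>
     (\<exists>c C :: real. c > 0 \<and> C > 0 \<and>
        (\<forall>\<xi>. max 0 \<xi> < u \<xi> \<and> u \<xi> < max 0 \<xi> + C * exp (- c * \<bar>\<xi>\<bar>)))"
proof (rule ex1I[of _ u0])
  show "C2_real u0 \<and> mono u0 \<and>
     (\<forall>\<xi>. deriv (deriv u0) \<xi> = (u0 \<xi> - \<xi>) * deriv u0 \<xi>) \<and>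
     (\<exists>c C :: real. c > 0 \<and> C > 0 \<and>
        (\<forall>\<xi>. max 0 \<xi> < u0 \<xi> \<and> u0 \<xi> < max 0 \<xi> + C * exp (- c * \<bar>\<xi>\<bar>)))"
    using u0_C2 u0_mono u0_ode u0_bounds by blast
next
  fix u :: "real \<Rightarrow> real"
  assume "C2_real u \<and> mono u \<and>
     (\<forall>\<xi>. deriv (deriv u) \<xi> = (u \<xi> - \<xi>) * deriv u \<xi>) \<and>
     (\<exists>c C :: real. c > 0 \<and> C > 0 \<and>
        (\<forall>\<xi>. max 0 \<xi> < u \<xi> \<and> u \<xi> < max 0 \<xi> + C * exp (- c * \<bar>\<xi>\<bar>)))"
  then show "u = u0" using uniq by blast
qed

end
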